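(* The canonical model $\mathcal{M}_c=(W_c,\leq_c,R_c,V^+_c,V^-_c)$ is a Nelsonian conditional model: $W_c\neq\emptyset$, $\leq_c$ is a preorder, $R_c$ is well defined (independent of the representative formula), and $R_c$ satisfies conditions (c1) and (c2).
   Context: $\mathcal{L}_{\Box\!\!\rightarrow}$ is built from propositional variables with $\wedge,\vee,\to$, strong negation $\sim$, and a binary would-conditional $\Box\!\!\rightarrow$; $\phi\Diamond\!\!\rightarrow\psi$ abbreviates $\sim(\phi\Box\!\!\rightarrow\sim\psi)$. Abbreviations: $\leftrightarrow$ is mutual $\to$; $\phi\Rightarrow\psi:=(\phi\to\psi)\wedge(\sim\psi\to\sim\phi)$; $\phi\Leftrightarrow\psi:=(\phi\Rightarrow\psi)\wedge(\psi\Rightarrow\phi)$. $\mathbb{N}4\mathbb{CK}$: modus ponens; positive intuitionistic schemes; $\sim\sim\phi\leftrightarrow\phi$, $\sim(\phi\wedge\psi)\leftrightarrow(\sim\phi\vee\sim\psi)$, $\sim(\phi\vee\psi)\leftrightarrow(\sim\phi\wedge\sim\psi)$, $\sim(\phi\to\psi)\leftrightarrow(\phi\wedge\sim\psi)$; (A1) $((\phi\Box\!\!\rightarrow\psi)\wedge(\phi\Box\!\!\rightarrow\chi))\Leftrightarrow(\phi\Box\!\!\rightarrow(\psi\wedge\chi))$; (A2) $(\sim(\phi\Box\!\!\rightarrow\psi)\wedge(\phi\Box\!\!\rightarrow\chi))\to\sim(\phi\Box\!\!\rightarrow(\psi\vee\sim\chi))$; (A3) $((\phi\Diamond\!\!\rightarrow\psi)\to(\phi\Box\!\!\rightarrow\chi))\to(\phi\Box\!\!\rightarrow(\psi\to\chi))$;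 (A4) $\phi\Box\!\!\rightarrow(\psi\to\psi)$; rules: from $\phi\Leftrightarrow\psi$ infer $(\phi\Box\!\!\rightarrow\chi)\Leftrightarrow(\psi\Box\!\!\rightarrow\chi)$; from $\phi\leftrightarrow\psi$ infer $(\chi\Box\!\!\rightarrow\phi)\leftrightarrow(\chi\Box\!\!\rightarrow\psi)$; from $\sim\phi\leftrightarrow\sim\psi$ infer $\sim(\chi\Box\!\!\rightarrow\phi)\leftrightarrow\sim(\chi\Box\!\!\rightarrow\psi)$. $\Gamma\vdash\Delta$ means some nonempty finite disjunction of members of $\Delta$ is derivable from $\Gamma$ and theorems by modus ponens. A bi-set $(\Gamma,\Delta)$ is maximal iff $\Gamma\not\vdash\Delta$ and $\Gamma\cup\Delta=\mathcal{L}_{\Box\!\!\rightarrow}$. Canonical model: $W_c$ is the set of maximal bi-sets; $(\Gamma_0,\Delta_0)\leq_c(\Gamma_1,\Delta_1)$ iff $\Gamma_0\subseteq\Gamma_1$; $((\Gamma_0,\Delta_0),(X,Y),(\Gamma_1,\Delta_1))\in R_c$ iff there is $\phi$ with $X=\{(\Gamma,\Delta)\in W_c\mid\phi\in\Gamma\}$, $Y=\{(\Gamma,\Delta)\in W_c\mid\sim\phi\in\Gamma\}$, $\{\psi\mid\phi\Box\!\!\rightarrow\psi\in\Gamma_0\}\subseteq\Gamma_1$, and $\{\sim(\phi\Box\!\!\rightarrow\psi)\mid\sim\psi\in\Gamma_1\}\subseteq\Gamma_0$; $V^+_c(p)=\{(\Gamma,\Delta)\in W_c\mid p\in\Gamma\}$,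 $V^-_c(p)=\{(\Gamma,\Delta)\in W_c\mid\sim p\in\Gamma\}$. A Nelsonian conditional model is $(W,\leq,R,V^+,V^-)$ with $W\neq\emptyset$, $\leq$ a preorder, $V^\pm$ assigning upward-closed sets, $R\subseteq W\times(\mathcal{P}(W)\times\mathcal{P}(W))\times W$ satisfying for all $X,Y$: (c1) $w\leq w'$ and $R_{(X,Y)}(w,v)$ imply $R_{(X,Y)}(w',v')$ for some $v'\geq v$; (c2) $R_{(X,Y)}(w,v)$ and $v\leq v'$ imply $R_{(X,Y)}(w',v')$ for some $w'\geq w$. *)

theory Defs
  imports Main
begin

datatype fm =
    Var nat
  | Conj fm fm
  | Disj fm fm
  | Imp fm fm
  | SNeg fm
  | Cond fm fm       (* would-conditional  phi []-> psi *)

definition Dia :: "fm \<Rightarrow> fm \<Rightarrow> fm" where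
  "Dia a b = SNeg (Cond a (SNeg b))"

definition Iff :: "fm \<Rightarrow> fm \<Rightarrow> fm" where
  "Iff a b = Conj (Imp a b) (Imp b a)"

definition SImp :: "fm \<Rightarrow> fm \<Rightarrow> fm" where
  "SImp a b = Conj (Imp a b) (Imp (SNeg b) (SNeg a))"

definition SIff :: "fm \<Rightarrow> fm \<Rightarrow> fm" where
  "SIff a b = Conj (SImp a b) (SImp b a)"

inductive provable :: "fm \<Rightarrow> bool" where
  K:   "provable (Imp a (Imp b a))"
| S:   "provable (Imp (Imp a (Imp b c)) (Imp (Imp a b) (Imp a c)))"
| CE1: "provable (Imp (Conj a b) a)"
| CE2: "provable (Imp (Conj a b) b)"
| CI:  "provable (Imp a (Imp b (Conj a b)))"
| DI1: "provable (Imp a (Disj a b))"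
| DI2: "provable (Imp b (Disj a b))"
| DE:  "provable (Imp (Imp a c) (Imp (Imp b c) (Imp (Disj a b) c)))"
| N1:  "provable (Iff (SNeg (SNeg a)) a)"
| N2:  "provable (Iff (SNeg (Conj a b)) (Disj (SNeg a) (SNeg b)))"
| N3:  "provable (Iff (SNeg (Disj a b)) (Conj (SNeg a) (SNeg b)))"
| N4:  "provable (Iff (SNeg (Imp a b)) (Conj a (SNeg b)))"
| A1:  "provable (SIff (Conj (Cond a b) (Cond a c)) (Cond a (Conj b c)))"
| A2:  "provable (Imp (Conj (SNeg (Cond a b)) (Cond a c)) (SNeg (Cond a (Disj b (SNeg c)))))"
| A3:  "provable (Imp (Imp (Dia a b) (Cond a c)) (Cond a (Imp b c)))"
| A4:  "provable (Cond a (Imp b b))"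
| MP:  "provable (Imp a b) \<Longrightarrow> provable a \<Longrightarrow> provable b"
| RA:  "provable (SIff a b) \<Longrightarrow> provable (SIff (Cond a c) (Cond b c))"
| RC:  "provable (Iff a b) \<Longrightarrow> provable (Iff (Cond c a) (Cond c b))"
| RCN: "provable (Iff (SNeg a) (SNeg b)) \<Longrightarrow> provable (Iff (SNeg (Cond c a)) (SNeg (Cond c b)))"

inductive derivable :: "fm set \<Rightarrow> fm \<Rightarrow> bool" for \<Gamma> where
  dthm: "provable a \<Longrightarrow> derivable \<Gamma> a"
| dprem: "a \<in> \<Gamma> \<Longrightarrow> derivable \<Gamma> a"
| dmp: "derivable \<Gamma> (Imp a b) \<Longrightarrow> derivable \<Gamma> a \<Longrightarrow> derivable \<Gamma> b"

fun bigDisj :: "fm list \<Rightarrow> fm" where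
  "bigDisj [] = Var 0"  (* never used: only nonempty lists are considered *)
| "bigDisj [a] = a"
| "bigDisj (a # b # xs) = Disj a (bigDisj (b # xs))"

definition entails :: "fm set \<Rightarrow> fm set \<Rightarrow> bool" where
  "entails \<Gamma> \<Delta> \<longleftrightarrow> (\<exists>xs. xs \<noteq> [] \<and> set xs \<subseteq> \<Delta> \<and> derivable \<Gamma> (bigDisj xs))"

definition maximal :: "fm set \<times> fm set \<Rightarrow> bool" where
  "maximal p \<longleftrightarrow> \<not> entails (fst p) (snd p) \<and> fst p \<union> snd p = UNIV"

definition nelson_model ::
  "'w set \<Rightarrow> ('w \<Rightarrow> 'w \<Rightarrow> bool) \<Rightarrow> ('w \<Rightarrow> 'w set \<times> 'w set \<Rightarrow> 'w \<Rightarrow> bool)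
   \<Rightarrow> (nat \<Rightarrow> 'w set) \<Rightarrow> (nat \<Rightarrow> 'w set) \<Rightarrow> bool" where
  "nelson_model W le R Vp Vm \<longleftrightarrow>
     W \<noteq> {} \<and>
     (\<forall>w\<in>W. le w w) \<and>
     (\<forall>u\<in>W. \<forall>v\<in>W. \<forall>w\<in>W. le u v \<longrightarrow> le v w \<longrightarrow> le u w) \<and>
     (\<forall>p. Vp p \<subseteq> W \<and> (\<forall>w\<in>Vp p. \<forall>v\<in>W. le w v \<longrightarrow> v \<in> Vp p)) \<and>
     (\<forall>p. Vm p \<subseteq> W \<and> (\<forall>w\<in>Vm p. \<forall>v\<in>W. le w v \<longrightarrow> v \<in> Vm p)) \<and>
     (\<forall>w XY v. R w XY v \<longrightarrow> w \<in> W \<and> v \<in> W \<and> fst XY \<subseteq> W \<and> snd XY \<subseteq> W) \<and>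
     (\<forall>X Y. \<forall>w\<in>W. \<forall>w'\<in>W. \<forall>v\<in>W. le w w' \<and> R w (X, Y) v \<longrightarrow>
          (\<exists>v'\<in>W. le v v' \<and> R w' (X, Y) v')) \<and>
     (\<forall>X Y. \<forall>w\<in>W. \<forall>v\<in>W. \<forall>v'\<in>W. R w (X, Y) v \<and> le v v' \<longrightarrow>
          (\<exists>w'\<in>W. le w w' \<and> R w' (X, Y) v'))"

definition Wc :: "(fm set \<times> fm set) set" where
  "Wc = {p. maximal p}"

definition leq_c :: "fm set \<times> fm set \<Rightarrow> fm set \<times> fm set \<Rightarrow> bool" where
  "leq_c p q \<longleftrightarrow> fst p \<subseteq> fst q"

definition ext_pos :: "fm \<Rightarrow> (fm set \<times> fm set) set" where
  "ext_pos a = {p \<in> Wc. a \<in> fst p}"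

definition ext_neg :: "fm \<Rightarrow> (fm set \<times> fm set) set" where
  "ext_neg a = {p \<in> Wc. SNeg a \<in> fst p}"

definition cond_c :: "fm \<Rightarrow> fm set \<times> fm set \<Rightarrow> fm set \<times> fm set \<Rightarrow> bool" where
  "cond_c a p q \<longleftrightarrow>
     {b. Cond a b \<in> fst p} \<subseteq> fst q \<and>
     {SNeg (Cond a b) | b. SNeg b \<in> fst q} \<subseteq> fst p"

definition R_c :: "fm set \<times> fm set \<Rightarrow> (fm set \<times> fm set) set \<times> (fm set \<times> fm set) set
                    \<Rightarrow> fm set \<times> fm set \<Rightarrow> bool" where
  "R_c p XY q \<longleftrightarrow> p \<in> Wc \<and> q \<in> Wc \<and>
     (\<exists>a. fst XY = ext_pos a \<and> snd XY = ext_neg a \<and> cond_c a p q)"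

definition Vp_c :: "nat \<Rightarrow> (fm set \<times> fm set) set" where
  "Vp_c n = {p \<in> Wc. Var n \<in> fst p}"

definition Vm_c :: "nat \<Rightarrow> (fm set \<times> fm set) set" where
  "Vm_c n = {p \<in> Wc. SNeg (Var n) \<in> fst p}"

end

theory Submission
  imports Defs
begin

lemma imp_refl: "provable (Imp a a)"
proof -
  have 1: "provable (Imp (Imp a (Imp (Imp a a) a)) (Imp (Imp a (Imp a a)) (Imp a a)))" by (rule S)
  have 2: "provable (Imp a (Imp (Imp a a) a))" by (rule K)
  have 3: "provable (Imp a (Imp a a))" by (rule K)
  show ?thesis using MP[OF MP[OF 1 2] 3] .
qed

lemma der_mono: "derivable G a \<Longrightarrow> G \<subseteq> H \<Longrightarrow> derivable H a"
  by (induction rule: derivable.induct) (auto intro: derivable.intros)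

lemma der_empty: "derivable {} a \<Longrightarrow> provable a"
  by (induction rule: derivable.induct) (auto intro: provable.intros)

lemma deduction: "derivable (insert a G) b \<Longrightarrow> derivable G (Imp a b)"
proof (induction rule: derivable.induct)
  case (dthm b)
  have "derivable G (Imp b (Imp a b))" by (rule derivable.dthm[OF K])
  moreover have "derivable G b" using dthm by (rule derivable.dthm)
  ultimately show ?case by (rule derivable.dmp)
next
  case (dprem b)
  then show ?case
  proof
    assume "b = a" then show ?thesis using imp_refl dthm by blast
  next
    assume "b \<in> G"
    have "derivable G (Imp b (Imp a b))" by (rule derivable.dthm[OF K])
    moreover have "derivable G b" using \<open>b \<in> G\<close> by (rule derivable.dprem)
    ultimately show ?thesis by (rule derivable.dmp)
  qed
next
  case (dmp b c)
  have "derivable G (Imp (Imp a (Imp b c)) (Imp (Imp a b) (Imp a c)))" by (rule derivable.dthm[OF S])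
  then show ?case using dmp.IH derivable.dmp by blast
qed

lemma undeduct: "derivable G (Imp a b) \<Longrightarrow> derivable (insert a G) b"
  using der_mono dmp dprem by (metis insertI1 subset_insertI)

lemma cut: "derivable (insert a G) b \<Longrightarrow> derivable G a \<Longrightarrow> derivable G b"
  using deduction dmp by blast

lemma der_finite: "derivable G a \<Longrightarrow> \<exists>F. finite F \<and> F \<subseteq> G \<and> derivable F a"
proof (induction rule: derivable.induct)
  case (dthm a)
  then show ?case using derivable.dthm by blast
next
  case (dprem a)
  then show ?case using derivable.dprem[of a "{a}"] by blast
next
  case (dmp a b)
  then obtain F1 F2 where "finite F1" "F1 \<subseteq> G" "derivable F1 (Imp a b)"
     "finite F2" "F2 \<subseteq> G" "derivable F2 a" by blast
  then show ?case using derivable.dmp[of "F1 \<union> F2" a b] der_mono[of F1 _ "F1 \<union> F2"]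
      der_mono[of F2 _ "F1 \<union> F2"]
    by (metis Un_least finite_UnI sup_ge1 sup_ge2)
qed

lemma dconjI: "derivable G a \<Longrightarrow> derivable G b \<Longrightarrow> derivable G (Conj a b)"
  using dmp[OF dmp[OF dthm[OF CI]]] by blast
lemma dconjE1: "derivable G (Conj a b) \<Longrightarrow> derivable G a"
  using dmp[OF dthm[OF CE1]] by blast
lemma dconjE2: "derivable G (Conj a b) \<Longrightarrow> derivable G b"
  using dmp[OF dthm[OF CE2]] by blast
lemma ddisjI1: "derivable G a \<Longrightarrow> derivable G (Disj a b)"
  using dmp[OF dthm[OF DI1]] by blast
lemma ddisjI2: "derivable G b \<Longrightarrow> derivable G (Disj a b)"
  using dmp[OF dthm[OF DI2]] by blast
lemma ddisjE: "derivable G (Imp a c) \<Longrightarrow> derivable G (Imp b c) \<Longrightarrow> derivable G (Imp (Disj a b) c)"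
  using dmp[OF dmp[OF dthm[OF DE]]] by blast
lemma dprov: "provable (Imp a b) \<Longrightarrow> derivable G a \<Longrightarrow> derivable G b"
  using dmp dthm by blast
lemma iffD1: "provable (Iff a b) \<Longrightarrow> provable (Imp a b)"
  unfolding Iff_def using MP CE1 by blast
lemma iffD2: "provable (Iff a b) \<Longrightarrow> provable (Imp b a)"
  unfolding Iff_def using MP CE2 by blast
lemma dtrans: "derivable G (Imp a b) \<Longrightarrow> derivable G (Imp b c) \<Longrightarrow> derivable G (Imp a c)"
proof -
  assume 1: "derivable G (Imp a b)" and 2: "derivable G (Imp b c)"
  have "derivable (insert a G) c"
    using undeduct[OF 1] der_mono[OF 2, of "insert a G"] dmp by blast
  then show ?thesis by (rule deduction)
qed
lemma prov_of: "(\<And>G. derivable G a) \<Longrightarrow> provable a"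
  using der_empty by blast

lemma bigDisj_closed:
  "xs \<noteq> [] \<Longrightarrow> (\<forall>x\<in>set xs. Q x) \<Longrightarrow> (\<forall>a b. Q a \<longrightarrow> Q b \<longrightarrow> Q (Disj a b)) \<Longrightarrow> Q (bigDisj xs)"
  by (induction xs rule: bigDisj.induct) auto

lemma bigDisj_in: "x \<in> set xs \<Longrightarrow> provable (Imp x (bigDisj xs))"
proof (induction xs rule: bigDisj.induct)
  case 1 then show ?case by simp
next
  case (2 a) then show ?case using imp_refl by simp
next
  case (3 a b xs)
  show ?case
  proof (cases "x = a")
    case True then show ?thesis using DI1 by simp
  next
    case False
    then have "provable (Imp x (bigDisj (b # xs)))" using 3 by simp
    then show ?thesis using DI2 prov_of dtrans dthm by (metis bigDisj.simps(3))
  qed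
qed

lemma bigDisj_sub: "xs \<noteq> [] \<Longrightarrow> set xs \<subseteq> set ys \<Longrightarrow> derivable G (Imp (bigDisj xs) (bigDisj ys))"
  using bigDisj_closed[of xs "\<lambda>c. derivable G (Imp c (bigDisj ys))"] ddisjE bigDisj_in dthm
  by (metis subsetD)

section \<open>Lindenbaum\<close>

lemma chain_fin:
  assumes "finite F" "F \<subseteq> G \<union> \<Union>C" "C \<noteq> {}" "chain\<^sub>\<subseteq> C" "\<forall>X\<in>C. G \<subseteq> X"
  shows "\<exists>X\<in>C. F \<subseteq> X"
  using assms
proof (induction F rule: finite_induct)
  case empty then show ?case by blast
next
  case (insert x F)
  then obtain X where X: "X \<in> C" "F \<subseteq> X" by blast
  obtain Y where Y: "Y \<in> C" "x \<in> Y" using insert.prems by blast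
  have "X \<subseteq> Y \<or> Y \<subseteq> X" using insert.prems(3) X Y unfolding chain_subset_def by blast
  then show ?case using X Y by blast
qed

lemma lindenbaum:
  assumes "\<not> entails G D"
  shows "\<exists>H. G \<subseteq> H \<and> D \<inter> H = {} \<and> maximal (H, - H)"
proof -
  let ?A = "{S. G \<subseteq> S \<and> \<not> entails S D}"
  have "\<forall>C\<in>chains ?A. \<exists>U\<in>?A. \<forall>X\<in>C. X \<subseteq> U"
  proof
    fix C assume C: "C \<in> chains ?A"
    have Csub: "C \<subseteq> ?A" and Cch: "chain\<^sub>\<subseteq> C" using C unfolding chains_def by auto
    have CG: "\<forall>X\<in>C. G \<subseteq> X" using Csub by auto
    have CN: "\<not> entails X D" if "X \<in> C" for X using Csub that by auto
    have "\<not> entails (G \<union> \<Union>C) D"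
    proof
      assume "entails (G \<union> \<Union>C) D"
      then obtain xs where "xs \<noteq> [] \<and> set xs \<subseteq> D \<and> derivable (G \<union> \<Union>C) (bigDisj xs)"
        unfolding entails_def by (rule exE)
      then have xs: "xs \<noteq> []" "set xs \<subseteq> D" "derivable (G \<union> \<Union>C) (bigDisj xs)" by simp_all
      obtain F where "finite F \<and> F \<subseteq> G \<union> \<Union>C \<and> derivable F (bigDisj xs)"
        using der_finite[OF xs(3)] by (rule exE)
      then have F: "finite F" "F \<subseteq> G \<union> \<Union>C" "derivable F (bigDisj xs)" by simp_all
      show False
      proof (cases "C = {}")
        case True
        then have "F \<subseteq> G" using F(2) by simp
        then have "derivable G (bigDisj xs)" using der_mono[OF F(3)] by blast
        then have "entails G D" using xs unfolding entails_def by blast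
        then show False using assms by blast
      next
        case False
        obtain X where X: "X \<in> C" "F \<subseteq> X" using chain_fin[OF F(1,2) False Cch CG] by blast
        have "derivable X (bigDisj xs)" using der_mono[OF F(3) X(2)] .
        then have "entails X D" using xs unfolding entails_def by blast
        then show False using CN[OF X(1)] by blast
      qed
    qed
    then have "G \<union> \<Union>C \<in> ?A" by blast
    moreover have "\<forall>X\<in>C. X \<subseteq> G \<union> \<Union>C" by blast
    ultimately show "\<exists>U\<in>?A. \<forall>X\<in>C. X \<subseteq> U" by blast
  qed
  then obtain M where M: "M \<in> ?A" and Mmax: "\<forall>X\<in>?A. M \<subseteq> X \<longrightarrow> X = M"
    using Zorn_Lemma2[of ?A] by blast
  let ?P = "\<lambda>c. \<exists>ds. ds \<noteq> [] \<and> set ds \<subseteq> D \<and> derivable M (Imp c (bigDisj ds))"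
  have Pout: "?P x" if "x \<notin> M" for x
  proof -
    have "insert x M \<notin> ?A" using Mmax that by blast
    then have "entails (insert x M) D" using M by blast
    then show ?thesis unfolding entails_def using deduction by blast
  qed
  have Pdisj: "\<forall>a b. ?P a \<longrightarrow> ?P b \<longrightarrow> ?P (Disj a b)"
  proof (intro allI impI)
    fix a b assume "?P a" "?P b"
    then obtain ds es where "ds \<noteq> []" "set ds \<subseteq> D" "derivable M (Imp a (bigDisj ds))"
      "es \<noteq> []" "set es \<subseteq> D" "derivable M (Imp b (bigDisj es))" by blast
    then have "ds @ es \<noteq> []" "set (ds @ es) \<subseteq> D" by auto
    moreover have "derivable M (Imp (Disj a b) (bigDisj (ds @ es)))"
    proof (rule ddisjE)
      show "derivable M (Imp a (bigDisj (ds @ es)))"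
        using dtrans[OF \<open>derivable M (Imp a (bigDisj ds))\<close> bigDisj_sub[of ds "ds @ es"]] \<open>ds \<noteq> []\<close>
        by simp
      show "derivable M (Imp b (bigDisj (ds @ es)))"
        using dtrans[OF \<open>derivable M (Imp b (bigDisj es))\<close> bigDisj_sub[of es "ds @ es"]] \<open>es \<noteq> []\<close>
        by simp
    qed
    ultimately show "?P (Disj a b)" by blast
  qed
  have "\<not> entails M (- M)"
  proof
    assume "entails M (- M)"
    then obtain xs where xs: "xs \<noteq> []" "set xs \<subseteq> - M" "derivable M (bigDisj xs)"
      unfolding entails_def by blast
    have "?P (bigDisj xs)" using bigDisj_closed[OF xs(1), of ?P] Pout Pdisj xs(2) by blast
    then have "entails M D" using xs(3) dmp unfolding entails_def by blast
    then show False using M by blast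
  qed
  moreover have "D \<inter> M = {}"
  proof (rule ccontr)
    assume "D \<inter> M \<noteq> {}"
    then obtain d where "d \<in> D" "d \<in> M" by blast
    then have "entails M D" unfolding entails_def
      by (rule_tac x="[d]" in exI) (auto intro: dprem)
    then show False using M by blast
  qed
  ultimately show ?thesis using M unfolding maximal_def by auto
qed


lemma mx_closed: "maximal p \<Longrightarrow> derivable (fst p) a \<Longrightarrow> a \<in> fst p"
proof (rule ccontr)
  assume m: "maximal p" and d: "derivable (fst p) a" and n: "a \<notin> fst p"
  then have "a \<in> snd p" unfolding maximal_def by blast
  then have "entails (fst p) (snd p)" unfolding entails_def using d
    by (rule_tac x="[a]" in exI) simp
  then show False using m unfolding maximal_def by blast
qed

lemma mx_prime: "maximal p \<Longrightarrow> Disj a b \<in> fst p \<Longrightarrow> a \<in> fst p \<or> b \<in> fst p"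
proof (rule ccontr)
  assume m: "maximal p" and d: "Disj a b \<in> fst p" and n: "\<not> (a \<in> fst p \<or> b \<in> fst p)"
  then have "a \<in> snd p" "b \<in> snd p" unfolding maximal_def by blast+
  moreover have "derivable (fst p) (bigDisj [a, b])" using d by (simp add: dprem)
  ultimately have "entails (fst p) (snd p)" unfolding entails_def
    by (rule_tac x="[a, b]" in exI) simp
  then show False using m unfolding maximal_def by blast
qed

lemma mx_thm: "maximal p \<Longrightarrow> provable (Imp a b) \<Longrightarrow> a \<in> fst p \<Longrightarrow> b \<in> fst p"
  using mx_closed dprov dprem by blast

lemma mx_prov: "maximal p \<Longrightarrow> provable a \<Longrightarrow> a \<in> fst p"
  using mx_closed dthm by blast

lemma mx_mp: "maximal p \<Longrightarrow> Imp a b \<in> fst p \<Longrightarrow> a \<in> fst p \<Longrightarrow> b \<in> fst p"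
  using mx_closed dmp dprem by blast

lemma Wc_max: "p \<in> Wc \<Longrightarrow> maximal p" unfolding Wc_def by simp

definition tt :: fm where "tt = Imp (Var 0) (Var 0)"

lemma conjP1: "provable (Conj a b) \<Longrightarrow> provable a" using MP CE1 by blast
lemma conjP2: "provable (Conj a b) \<Longrightarrow> provable b" using MP CE2 by blast
lemma conjP: "provable a \<Longrightarrow> provable b \<Longrightarrow> provable (Conj a b)" using MP CI by blast
lemma ptrans: "provable (Imp a b) \<Longrightarrow> provable (Imp b c) \<Longrightarrow> provable (Imp a c)"
  using prov_of dtrans dthm by blast

lemma n1a: "provable (Imp a (SNeg (SNeg a)))" using iffD2[OF N1] .
lemma n1b: "provable (Imp (SNeg (SNeg a)) a)" using iffD1[OF N1] .

lemma a1_pos: "provable (Imp (Conj (Cond c a) (Cond c b)) (Cond c (Conj a b)))"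
  using A1[of c a b] unfolding SIff_def SImp_def using conjP1 by blast
lemma a1_neg1: "provable (Imp (SNeg (Cond c (Conj a b))) (SNeg (Conj (Cond c a) (Cond c b))))"
  using A1[of c a b] unfolding SIff_def SImp_def using conjP1 conjP2 by blast
lemma a1_rev: "provable (Imp (Cond c (Conj a b)) (Conj (Cond c a) (Cond c b)))"
  using A1[of c a b] unfolding SIff_def SImp_def using conjP1 conjP2 by blast
lemma a1_neg2: "provable (Imp (SNeg (Conj (Cond c a) (Cond c b))) (SNeg (Cond c (Conj a b))))"
  using A1[of c a b] unfolding SIff_def SImp_def using conjP2 by blast

lemma posmono:
  assumes "provable (Imp a b)"
  shows "provable (Imp (Cond c a) (Cond c b))"
proof -
  have i1: "provable (Imp a (Conj a b))"
  proof (rule prov_of, rule deduction)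
    fix G
    have "derivable (insert a G) a" by (rule dprem) simp
    moreover have "derivable (insert a G) b" using dprov[OF assms] calculation .
    ultimately show "derivable (insert a G) (Conj a b)" by (rule dconjI)
  qed
  have "provable (Iff a (Conj a b))" unfolding Iff_def using conjP[OF i1 CE1] .
  then have "provable (Iff (Cond c a) (Cond c (Conj a b)))" by (rule RC)
  then have "provable (Imp (Cond c a) (Cond c (Conj a b)))" by (rule iffD1)
  moreover have "provable (Imp (Cond c (Conj a b)) (Cond c b))"
    using ptrans[OF a1_rev CE2] .
  ultimately show ?thesis by (rule ptrans)
qed

lemma negmono:
  assumes "provable (Imp (SNeg a) (SNeg b))"
  shows "provable (Imp (SNeg (Cond c a)) (SNeg (Cond c b)))"
proof -
  have s1: "provable (Imp (SNeg (Cond c a)) (SNeg (Conj (Cond c a) (Cond c b))))"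
    using ptrans[OF DI1 iffD2[OF N2]] .
  have s2: "provable (Imp (SNeg (Cond c a)) (SNeg (Cond c (Conj a b))))"
    using ptrans[OF s1 a1_neg2] .
  have f: "provable (Imp (SNeg (Conj a b)) (SNeg b))"
  proof -
    have "provable (Imp (Disj (SNeg a) (SNeg b)) (SNeg b))"
      using prov_of ddisjE dthm assms imp_refl by metis
    then show ?thesis using ptrans[OF iffD1[OF N2]] by blast
  qed
  have g: "provable (Imp (SNeg b) (SNeg (Conj a b)))"
    using ptrans[OF DI2 iffD2[OF N2]] .
  have "provable (Iff (SNeg (Conj a b)) (SNeg b))" unfolding Iff_def using conjP[OF f g] .
  then have "provable (Iff (SNeg (Cond c (Conj a b))) (SNeg (Cond c b)))" by (rule RCN)
  then show ?thesis using ptrans[OF s2 iffD1] by blast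
qed

lemma a3step:
  assumes "derivable G (Imp (SNeg (Cond c t)) (Cond c d))"
  shows "derivable G (Cond c (Imp (SNeg t) d))"
proof -
  have "provable (Imp (SNeg (SNeg (SNeg t))) (SNeg t))" by (rule n1b)
  then have "provable (Imp (SNeg (Cond c (SNeg (SNeg t)))) (SNeg (Cond c t)))" by (rule negmono)
  then have "derivable G (Imp (SNeg (Cond c (SNeg (SNeg t)))) (SNeg (Cond c t)))" by (rule dthm)
  then have "derivable G (Imp (Dia c (SNeg t)) (Cond c d))"
    unfolding Dia_def using assms by (rule dtrans)
  then show ?thesis by (rule dmp[OF dthm[OF A3]])
qed

lemma p9: "provable (Imp (SNeg (Disj (SNeg (Imp x (SNeg y))) (SNeg x))) (SNeg y))"
proof (rule prov_of, rule deduction)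
  fix G
  let ?H = "insert (SNeg (Disj (SNeg (Imp x (SNeg y))) (SNeg x))) G"
  have "derivable ?H (SNeg (Disj (SNeg (Imp x (SNeg y))) (SNeg x)))" by (rule dprem) simp
  then have 0: "derivable ?H (Conj (SNeg (SNeg (Imp x (SNeg y)))) (SNeg (SNeg x)))"
    by (rule dprov[OF iffD1[OF N3]])
  have 1: "derivable ?H (Imp x (SNeg y))" using dprov[OF n1b dconjE1[OF 0]] .
  have 2: "derivable ?H x" using dprov[OF n1b dconjE2[OF 0]] .
  show "derivable ?H (SNeg y)" using dmp[OF 1 2] .
qed

lemma closure_conj:
  assumes "derivable GS c" "GS = G \<union> S" "\<forall>x y. x \<in> S \<longrightarrow> y \<in> S \<longrightarrow> Conj x y \<in> S" "tt \<in> S"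
  shows "\<exists>\<chi>\<in>S. derivable G (Imp \<chi> c)"
  using assms
proof (induction rule: derivable.induct)
  case (dthm a)
  have "derivable G (Imp tt a)" using dmp[OF derivable.dthm[OF K] derivable.dthm[OF dthm(1)]] .
  then show ?case using dthm(4) by (rule_tac x=tt in bexI)
next
  case (dprem a)
  show ?case
  proof (cases "a \<in> S")
    case True
    then show ?thesis using derivable.dthm[OF imp_refl, of G a] by (rule_tac x=a in bexI)
  next
    case False
    then have "a \<in> G" using dprem(1,2) by simp
    then have "derivable G (Imp tt a)" by (rule dmp[OF derivable.dthm[OF K] derivable.dprem])
    then show ?thesis using dprem(4) by (rule_tac x=tt in bexI)
  qed
next
  case (dmp a b)
  obtain x where x: "x \<in> S" "derivable G (Imp x (Imp a b))" using dmp.IH(1)[OF dmp.prems] by (rule bexE)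
  obtain y where y: "y \<in> S" "derivable G (Imp y a)" using dmp.IH(2)[OF dmp.prems] by (rule bexE)
  have "derivable (insert (Conj x y) G) b"
  proof -
    let ?H = "insert (Conj x y) G"
    have hc: "derivable ?H (Conj x y)" by (rule derivable.dprem) simp
    have hx: "derivable ?H x" using dconjE1[OF hc] .
    have hy: "derivable ?H y" using dconjE2[OF hc] .
    have "derivable ?H (Imp x (Imp a b))" by (rule der_mono[OF x(2)]) blast
    then have "derivable ?H (Imp a b)" using hx by (rule derivable.dmp)
    moreover have "derivable ?H (Imp y a)" by (rule der_mono[OF y(2)]) blast
    then have "derivable ?H a" using hy by (rule derivable.dmp)
    ultimately show ?thesis by (rule derivable.dmp)
  qed
  then have "derivable G (Imp (Conj x y) b)" by (rule deduction)
  moreover have "Conj x y \<in> S" using dmp.prems(2) x(1) y(1) by blast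
  ultimately show ?case by blast
qed

fun chn :: "fm list \<Rightarrow> fm \<Rightarrow> fm" where
  "chn [] c = c"
| "chn (x # xs) c = Imp x (chn xs c)"

lemma chn_ded: "derivable (G \<union> set xs) c \<Longrightarrow> derivable G (chn xs c)"
proof (induction xs arbitrary: G)
  case Nil then show ?case by simp
next
  case (Cons x xs)
  have "insert x G \<union> set xs = G \<union> set (x # xs)" by auto
  then have "derivable (insert x G \<union> set xs) c" using Cons.prems by simp
  then have "derivable (insert x G) (chn xs c)" by (rule Cons.IH)
  then show ?case using deduction by simp
qed

lemma chain_lemma:
  assumes "derivable (G \<union> S) c"
  shows "\<exists>xs. set xs \<subseteq> S \<and> derivable G (chn xs c)"
proof -
  obtain F where "finite F \<and> F \<subseteq> G \<union> S \<and> derivable F c" using der_finite[OF assms] by (rule exE)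
  then have F: "finite F" "F \<subseteq> G \<union> S" "derivable F c" by simp_all
  obtain xs where xs: "set xs = F \<inter> S" using finite_list[of "F \<inter> S"] F(1) by blast
  have "F \<subseteq> G \<union> set xs" using F(2) xs by blast
  then have "derivable (G \<union> set xs) c" using der_mono[OF F(3)] by blast
  then show ?thesis using chn_ded xs by blast
qed


section \<open>Well-definedness\<close>

lemma max_in_Wc: "maximal (H, - H) \<Longrightarrow> (H, - H) \<in> Wc" unfolding Wc_def by simp

lemma ext_sub:
  assumes "\<forall>p\<in>Wc. x \<in> fst p \<longrightarrow> y \<in> fst p"
  shows "provable (Imp x y)"
proof (rule ccontr)
  assume np: "\<not> provable (Imp x y)"
  have "\<not> entails {x} {y}"
  proof
    assume "entails {x} {y}"
    then obtain xs where "xs \<noteq> [] \<and> set xs \<subseteq> {y} \<and> derivable {x} (bigDisj xs)"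
      unfolding entails_def by (rule exE)
    then have xs: "xs \<noteq> []" "set xs \<subseteq> set [y]" "derivable {x} (bigDisj xs)" by simp_all
    have "derivable {x} (Imp (bigDisj xs) (bigDisj [y]))" using bigDisj_sub[OF xs(1,2)] .
    then have "derivable {x} (Imp (bigDisj xs) y)" by simp
    then have "derivable {x} y" using xs(3) by (rule dmp)
    then have "derivable (insert x {}) y" by simp
    then have "derivable {} (Imp x y)" by (rule deduction)
    then have "provable (Imp x y)" by (rule der_empty)
    then show False using np by simp
  qed
  from lindenbaum[OF this] obtain H where H: "{x} \<subseteq> H" "{y} \<inter> H = {}" "maximal (H, - H)"
    by blast
  have "(H, - H) \<in> Wc" using max_in_Wc[OF H(3)] .
  moreover have "x \<in> fst (H, - H)" using H(1) by simp
  ultimately have "y \<in> fst (H, - H)" using assms by blast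
  then show False using H(2) by simp
qed

lemma cond_c_alt: "cond_c a p q \<longleftrightarrow>
   (\<forall>b. Cond a b \<in> fst p \<longrightarrow> b \<in> fst q) \<and> (\<forall>b. SNeg b \<in> fst q \<longrightarrow> SNeg (Cond a b) \<in> fst p)"
  unfolding cond_c_def by auto

lemma wd:
  assumes "ext_pos a = ext_pos a'" "ext_neg a = ext_neg a'" "p \<in> Wc" "q \<in> Wc"
  shows "cond_c a p q \<longleftrightarrow> cond_c a' p q"
proof -
  have e1: "\<forall>r\<in>Wc. a \<in> fst r \<longleftrightarrow> a' \<in> fst r" using assms(1) unfolding ext_pos_def by blast
  have e2: "\<forall>r\<in>Wc. SNeg a \<in> fst r \<longleftrightarrow> SNeg a' \<in> fst r" using assms(2) unfolding ext_neg_def by blast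
  have i1: "provable (Imp a a')" using e1 by (intro ext_sub) blast
  have i2: "provable (Imp a' a)" using e1 by (intro ext_sub) blast
  have i3: "provable (Imp (SNeg a) (SNeg a'))" using e2 by (intro ext_sub) blast
  have i4: "provable (Imp (SNeg a') (SNeg a))" using e2 by (intro ext_sub) blast
  have "provable (SIff a a')" unfolding SIff_def SImp_def
    using conjP[OF conjP[OF i1 i4] conjP[OF i2 i3]] .
  then have r: "provable (SIff (Cond a c) (Cond a' c))" for c by (rule RA)
  have j1: "provable (Imp (Cond a c) (Cond a' c))" for c using r[of c] unfolding SIff_def SImp_def
    using conjP1 by blast
  have j2: "provable (Imp (Cond a' c) (Cond a c))" for c using r[of c] unfolding SIff_def SImp_def
    using conjP1 conjP2 by blast
  have j3: "provable (Imp (SNeg (Cond a c)) (SNeg (Cond a' c)))" for c using r[of c] unfolding SIff_def SImp_def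
    using conjP1 conjP2 by blast
  have j4: "provable (Imp (SNeg (Cond a' c)) (SNeg (Cond a c)))" for c using r[of c] unfolding SIff_def SImp_def
    using conjP1 conjP2 by blast
  have mp: "maximal p" using assms(3) by (rule Wc_max)
  have k1: "Cond a c \<in> fst p \<longleftrightarrow> Cond a' c \<in> fst p" for c
    using mx_thm[OF mp j1] mx_thm[OF mp j2] by blast
  have k2: "SNeg (Cond a c) \<in> fst p \<longleftrightarrow> SNeg (Cond a' c) \<in> fst p" for c
    using mx_thm[OF mp j3] mx_thm[OF mp j4] by blast
  show ?thesis unfolding cond_c_alt using k1 k2 by simp
qed

section \<open>Condition c1\<close>

lemma c1:
  assumes p: "p \<in> Wc" and p': "p' \<in> Wc" and le: "fst p \<subseteq> fst p'" and q: "q \<in> Wc"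
    and cc: "cond_c a p q"
  shows "\<exists>q'\<in>Wc. fst q \<subseteq> fst q' \<and> cond_c a p' q'"
proof -
  have mp: "maximal p" using p by (rule Wc_max)
  have mp': "maximal p'" using p' by (rule Wc_max)
  have mq: "maximal q" using q by (rule Wc_max)
  let ?S = "{b. Cond a b \<in> fst p'}"
  let ?D = "{SNeg b | b. SNeg (Cond a b) \<notin> fst p'}"
  have Sconj: "\<forall>x y. x \<in> ?S \<longrightarrow> y \<in> ?S \<longrightarrow> Conj x y \<in> ?S"
  proof (intro allI impI)
    fix x y assume "x \<in> ?S" "y \<in> ?S"
    then have "Conj (Cond a x) (Cond a y) \<in> fst p'" using mx_closed[OF mp'] dconjI dprem
      by (metis mem_Collect_eq)
    then show "Conj x y \<in> ?S" using mx_thm[OF mp' a1_pos] by simp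
  qed
  have Stt: "tt \<in> ?S" unfolding tt_def using mx_prov[OF mp' A4] by simp
  have "\<not> entails (fst q \<union> ?S) ?D"
  proof
    assume "entails (fst q \<union> ?S) ?D"
    then obtain xs where "xs \<noteq> [] \<and> set xs \<subseteq> ?D \<and> derivable (fst q \<union> ?S) (bigDisj xs)"
      unfolding entails_def by (rule exE)
    then have xs: "xs \<noteq> []" "set xs \<subseteq> ?D" "derivable (fst q \<union> ?S) (bigDisj xs)" by simp_all
    obtain \<chi> where ch: "\<chi> \<in> ?S" "derivable (fst q) (Imp \<chi> (bigDisj xs))"
      using closure_conj[OF xs(3) refl Sconj Stt] by (rule bexE)
    let ?Q = "\<lambda>c. \<exists>\<psi>. SNeg (Cond a \<psi>) \<notin> fst p' \<and> provable (Imp c (SNeg \<psi>))"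
    have "?Q (bigDisj xs)"
    proof (rule bigDisj_closed[OF xs(1)])
      show "\<forall>x\<in>set xs. ?Q x"
      proof
        fix x assume "x \<in> set xs"
        then obtain b where "x = SNeg b" "SNeg (Cond a b) \<notin> fst p'" using xs(2) by blast
        then show "?Q x" using imp_refl by blast
      qed
      show "\<forall>c d. ?Q c \<longrightarrow> ?Q d \<longrightarrow> ?Q (Disj c d)"
      proof (intro allI impI)
        fix c d assume "?Q c" "?Q d"
        then obtain \<psi>1 \<psi>2 where h: "SNeg (Cond a \<psi>1) \<notin> fst p'" "provable (Imp c (SNeg \<psi>1))"
          "SNeg (Cond a \<psi>2) \<notin> fst p'" "provable (Imp d (SNeg \<psi>2))" by blast
        have "SNeg (Cond a (Conj \<psi>1 \<psi>2)) \<notin> fst p'"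
        proof
          assume "SNeg (Cond a (Conj \<psi>1 \<psi>2)) \<in> fst p'"
          then have "SNeg (Conj (Cond a \<psi>1) (Cond a \<psi>2)) \<in> fst p'" by (rule mx_thm[OF mp' a1_neg1])
          then have "Disj (SNeg (Cond a \<psi>1)) (SNeg (Cond a \<psi>2)) \<in> fst p'"
            by (rule mx_thm[OF mp' iffD1[OF N2]])
          then show False using mx_prime[OF mp'] h by blast
        qed
        moreover have "provable (Imp (Disj c d) (SNeg (Conj \<psi>1 \<psi>2)))"
        proof -
          have "provable (Imp (Disj c d) (Disj (SNeg \<psi>1) (SNeg \<psi>2)))"
          proof (rule prov_of, rule ddisjE)
            fix G
            show "derivable G (Imp c (Disj (SNeg \<psi>1) (SNeg \<psi>2)))"
              using dthm[OF ptrans[OF h(2) DI1]] .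
            show "derivable G (Imp d (Disj (SNeg \<psi>1) (SNeg \<psi>2)))"
              using dthm[OF ptrans[OF h(4) DI2]] .
          qed
          then show ?thesis using ptrans[OF _ iffD2[OF N2]] by blast
        qed
        ultimately show "?Q (Disj c d)" by blast
      qed
    qed
    then obtain \<psi> where psi: "SNeg (Cond a \<psi>) \<notin> fst p'" "provable (Imp (bigDisj xs) (SNeg \<psi>))"
      by blast
    have "derivable (fst q) (Imp \<chi> (SNeg \<psi>))" using dtrans[OF ch(2) dthm[OF psi(2)]] .
    then have "Imp \<chi> (SNeg \<psi>) \<in> fst q" by (rule mx_closed[OF mq])
    then have "SNeg (SNeg (Imp \<chi> (SNeg \<psi>))) \<in> fst q" by (rule mx_thm[OF mq n1a])
    moreover have "\<forall>b. SNeg b \<in> fst q \<longrightarrow> SNeg (Cond a b) \<in> fst p" using cc unfolding cond_c_alt by (rule conjunct2)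
    ultimately have "SNeg (Cond a (SNeg (Imp \<chi> (SNeg \<psi>)))) \<in> fst p" by simp
    then have n: "SNeg (Cond a (SNeg (Imp \<chi> (SNeg \<psi>)))) \<in> fst p'" using le by (rule subsetD[rotated])
    have c: "Cond a \<chi> \<in> fst p'" using ch(1) by simp
    have "Conj (SNeg (Cond a (SNeg (Imp \<chi> (SNeg \<psi>))))) (Cond a \<chi>) \<in> fst p'"
      using mx_closed[OF mp' dconjI[OF dprem[OF n] dprem[OF c]]] .
    then have "SNeg (Cond a (Disj (SNeg (Imp \<chi> (SNeg \<psi>))) (SNeg \<chi>))) \<in> fst p'"
      by (rule mx_thm[OF mp' A2])
    then have "SNeg (Cond a \<psi>) \<in> fst p'" by (rule mx_thm[OF mp' negmono[OF p9]])
    then show False using psi(1) by blast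
  qed
  from lindenbaum[OF this] obtain H where H: "fst q \<union> ?S \<subseteq> H" "?D \<inter> H = {}" "maximal (H, - H)"
    by blast
  have "cond_c a p' (H, - H)" unfolding cond_c_alt
  proof (intro conjI allI impI)
    fix b assume "Cond a b \<in> fst p'"
    then have "b \<in> ?S" by simp
    then show "b \<in> fst (H, - H)" using H(1) by (simp add: subset_iff)
  next
    fix b assume "SNeg b \<in> fst (H, - H)"
    then have "SNeg b \<notin> ?D" using H(2) by (auto simp del: Collect_empty_eq)
    then show "SNeg (Cond a b) \<in> fst p'" by blast
  qed
  moreover have "fst q \<subseteq> fst (H, - H)" using H(1) by simp
  ultimately show ?thesis using max_in_Wc[OF H(3)] by (intro bexI[of _ "(H, - H)"] conjI)
qed


section \<open>Condition c2\<close>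

lemma c2_core:
  assumes "set ns \<subseteq> {SNeg (Cond a \<theta>) | \<theta>. SNeg \<theta> \<in> Q}"
    and "derivable Sg (chn ns (Cond a \<gamma>))"
  shows "\<exists>\<delta>. derivable Sg (Cond a \<delta>) \<and> derivable (insert \<delta> Q) \<gamma>"
  using assms
proof (induction ns arbitrary: Sg)
  case Nil
  have "derivable (insert \<gamma> Q) \<gamma>" by (rule dprem) simp
  then show ?case using Nil.prems(2) by auto
next
  case (Cons n ns)
  obtain \<theta> where th: "n = SNeg (Cond a \<theta>)" "SNeg \<theta> \<in> Q" using Cons.prems(1) by auto
  have "derivable Sg (Imp n (chn ns (Cond a \<gamma>)))" using Cons.prems(2) by simp
  then have "derivable (insert n Sg) (chn ns (Cond a \<gamma>))" by (rule undeduct)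
  moreover have "set ns \<subseteq> {SNeg (Cond a \<theta>) | \<theta>. SNeg \<theta> \<in> Q}" using Cons.prems(1) by simp
  ultimately obtain \<delta> where d: "derivable (insert n Sg) (Cond a \<delta>)" "derivable (insert \<delta> Q) \<gamma>"
    using Cons.IH by blast
  have "derivable Sg (Imp (SNeg (Cond a \<theta>)) (Cond a \<delta>))" using deduction[OF d(1)] th(1) by simp
  then have 1: "derivable Sg (Cond a (Imp (SNeg \<theta>) \<delta>))" by (rule a3step)
  let ?Q = "insert (Imp (SNeg \<theta>) \<delta>) Q"
  have "derivable ?Q (Imp (SNeg \<theta>) \<delta>)" by (rule dprem) simp
  moreover have "derivable ?Q (SNeg \<theta>)" by (rule dprem) (simp add: th(2))
  ultimately have hd: "derivable ?Q \<delta>" by (rule dmp)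
  have "derivable (insert \<delta> ?Q) \<gamma>" by (rule der_mono[OF d(2)]) blast
  then have 2: "derivable ?Q \<gamma>" using hd by (rule cut)
  show ?case using 1 2 by blast
qed

lemma c2:
  assumes p: "p \<in> Wc" and q: "q \<in> Wc" and q': "q' \<in> Wc" and le: "fst q \<subseteq> fst q'"
    and cc: "cond_c a p q"
  shows "\<exists>p'\<in>Wc. fst p \<subseteq> fst p' \<and> cond_c a p' q'"
proof -
  have mp: "maximal p" using p by (rule Wc_max)
  have mq': "maximal q'" using q' by (rule Wc_max)
  let ?N = "{SNeg (Cond a \<theta>) | \<theta>. SNeg \<theta> \<in> fst q'}"
  let ?P = "{Cond a \<psi> | \<psi>. \<psi> \<notin> fst q'}"
  have "\<not> entails (fst p \<union> ?N) ?P"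
  proof
    assume "entails (fst p \<union> ?N) ?P"
    then obtain ds where "ds \<noteq> [] \<and> set ds \<subseteq> ?P \<and> derivable (fst p \<union> ?N) (bigDisj ds)"
      unfolding entails_def by (rule exE)
    then have ds: "ds \<noteq> []" "set ds \<subseteq> ?P" "derivable (fst p \<union> ?N) (bigDisj ds)" by simp_all
    let ?Qd = "\<lambda>c. \<exists>\<psi>. \<psi> \<notin> fst q' \<and> provable (Imp c (Cond a \<psi>))"
    have "?Qd (bigDisj ds)"
    proof (rule bigDisj_closed[OF ds(1)])
      show "\<forall>x\<in>set ds. ?Qd x"
      proof
        fix x assume "x \<in> set ds"
        then obtain b where "x = Cond a b" "b \<notin> fst q'" using ds(2) by blast
        then show "?Qd x" using imp_refl by blast
      qed
      show "\<forall>c d. ?Qd c \<longrightarrow> ?Qd d \<longrightarrow> ?Qd (Disj c d)"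
      proof (intro allI impI)
        fix c d assume "?Qd c" "?Qd d"
        then obtain \<psi>1 \<psi>2 where h: "\<psi>1 \<notin> fst q'" "provable (Imp c (Cond a \<psi>1))"
          "\<psi>2 \<notin> fst q'" "provable (Imp d (Cond a \<psi>2))" by blast
        have "Disj \<psi>1 \<psi>2 \<notin> fst q'" using mx_prime[OF mq'] h(1,3) by blast
        moreover have "provable (Imp (Disj c d) (Cond a (Disj \<psi>1 \<psi>2)))"
        proof (rule prov_of, rule ddisjE)
          fix G
          show "derivable G (Imp c (Cond a (Disj \<psi>1 \<psi>2)))"
            using dthm[OF ptrans[OF h(2) posmono[OF DI1]]] .
          show "derivable G (Imp d (Cond a (Disj \<psi>1 \<psi>2)))"
            using dthm[OF ptrans[OF h(4) posmono[OF DI2]]] .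
        qed
        ultimately show "?Qd (Disj c d)" by blast
      qed
    qed
    then obtain \<psi> where psi: "\<psi> \<notin> fst q'" "provable (Imp (bigDisj ds) (Cond a \<psi>))" by blast
    have "derivable (fst p \<union> ?N) (Cond a \<psi>)" using dprov[OF psi(2) ds(3)] .
    then obtain ns where ns: "set ns \<subseteq> ?N" "derivable (fst p) (chn ns (Cond a \<psi>))"
      using chain_lemma by blast
    obtain \<delta> where d: "derivable (fst p) (Cond a \<delta>)" "derivable (insert \<delta> (fst q')) \<psi>"
      using c2_core[OF ns] by blast
    have "Cond a \<delta> \<in> fst p" using mx_closed[OF mp d(1)] .
    moreover have "\<forall>b. Cond a b \<in> fst p \<longrightarrow> b \<in> fst q" using cc unfolding cond_c_alt by (rule conjunct1)
    ultimately have "\<delta> \<in> fst q" by simp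
    then have "\<delta> \<in> fst q'" using le by (rule subsetD[rotated])
    then have "derivable (fst q') \<delta>" by (rule dprem)
    with d(2) have "derivable (fst q') \<psi>" by (rule cut)
    then have "\<psi> \<in> fst q'" by (rule mx_closed[OF mq'])
    then show False using psi(1) by simp
  qed
  from lindenbaum[OF this] obtain H where H: "fst p \<union> ?N \<subseteq> H" "?P \<inter> H = {}" "maximal (H, - H)"
    by blast
  have "cond_c a (H, - H) q'" unfolding cond_c_alt
  proof (intro conjI allI impI)
    fix b assume "Cond a b \<in> fst (H, - H)"
    then have "Cond a b \<notin> ?P" using H(2) by (auto simp del: Collect_empty_eq)
    then show "b \<in> fst q'" by blast
  next
    fix b assume "SNeg b \<in> fst q'"
    then have "SNeg (Cond a b) \<in> ?N" by blast
    then show "SNeg (Cond a b) \<in> fst (H, - H)" using H(1) by (simp add: subset_iff)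
  qed
  moreover have "fst p \<subseteq> fst (H, - H)" using H(1) by simp
  ultimately show ?thesis using max_in_Wc[OF H(3)] by (intro bexI[of _ "(H, - H)"] conjI)
qed

fun sem :: "fm \<Rightarrow> bool" where
  "sem (Var n) = False"
| "sem (Conj a b) = (sem a \<and> sem b)"
| "sem (Disj a b) = (sem a \<or> sem b)"
| "sem (Imp a b) = (sem a \<longrightarrow> sem b)"
| "sem (SNeg a) = (\<not> sem a)"
| "sem (Cond a b) = True"

lemma sound: "provable a \<Longrightarrow> sem a"
  by (induction rule: provable.induct) (auto simp: Iff_def SImp_def SIff_def Dia_def)

lemma Wc_ne: "Wc \<noteq> {}"
proof -
  have "\<not> entails {} {Var 0}"
  proof
    assume "entails {} {Var 0}"
    then obtain xs where "xs \<noteq> [] \<and> set xs \<subseteq> {Var 0} \<and> derivable {} (bigDisj xs)"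
      unfolding entails_def by (rule exE)
    then have xs: "xs \<noteq> []" "set xs \<subseteq> {Var 0}" "derivable {} (bigDisj xs)" by simp_all
    have "sem (bigDisj xs)" using sound[OF der_empty[OF xs(3)]] .
    moreover have "\<forall>x\<in>set xs. \<not> sem x" using xs(2) by auto
    then have "\<not> sem (bigDisj xs)"
      using bigDisj_closed[OF xs(1), of "\<lambda>c. \<not> sem c"] by simp
    ultimately show False by simp
  qed
  from lindenbaum[OF this] obtain H where "maximal (H, - H)" by blast
  then show ?thesis using max_in_Wc by blast
qed

theorem lemma10:
  shows "(\<forall>a a'. ext_pos a = ext_pos a' \<and> ext_neg a = ext_neg a' \<longrightarrow>
            (\<forall>p\<in>Wc. \<forall>q\<in>Wc. cond_c a p q \<longleftrightarrow> cond_c a' p q))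
         \<and> nelson_model Wc leq_c R_c Vp_c Vm_c"
proof (intro conjI)
  show "\<forall>a a'. ext_pos a = ext_pos a' \<and> ext_neg a = ext_neg a' \<longrightarrow>
            (\<forall>p\<in>Wc. \<forall>q\<in>Wc. cond_c a p q \<longleftrightarrow> cond_c a' p q)"
    using wd by blast
  show "nelson_model Wc leq_c R_c Vp_c Vm_c"
    unfolding nelson_model_def
  proof (intro conjI)
    show "Wc \<noteq> {}" by (rule Wc_ne)
    show "\<forall>w\<in>Wc. leq_c w w" unfolding leq_c_def by simp
    show "\<forall>u\<in>Wc. \<forall>v\<in>Wc. \<forall>w\<in>Wc. leq_c u v \<longrightarrow> leq_c v w \<longrightarrow> leq_c u w"
      unfolding leq_c_def by blast
    show "\<forall>p. Vp_c p \<subseteq> Wc \<and> (\<forall>w\<in>Vp_c p. \<forall>v\<in>Wc. leq_c w v \<longrightarrow> v \<in> Vp_c p)"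
      unfolding Vp_c_def leq_c_def by blast
    show "\<forall>p. Vm_c p \<subseteq> Wc \<and> (\<forall>w\<in>Vm_c p. \<forall>v\<in>Wc. leq_c w v \<longrightarrow> v \<in> Vm_c p)"
      unfolding Vm_c_def leq_c_def by blast
    show "\<forall>w XY v. R_c w XY v \<longrightarrow> w \<in> Wc \<and> v \<in> Wc \<and> fst XY \<subseteq> Wc \<and> snd XY \<subseteq> Wc"
      unfolding R_c_def ext_pos_def ext_neg_def by auto
    show "\<forall>X Y. \<forall>w\<in>Wc. \<forall>w'\<in>Wc. \<forall>v\<in>Wc. leq_c w w' \<and> R_c w (X, Y) v \<longrightarrow>
          (\<exists>v'\<in>Wc. leq_c v v' \<and> R_c w' (X, Y) v')"
    proof (intro allI ballI impI)
      fix X Y w w' v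
      assume w: "w \<in> Wc" and w': "w' \<in> Wc" and v: "v \<in> Wc" and h: "leq_c w w' \<and> R_c w (X, Y) v"
      then obtain a where a: "X = ext_pos a" "Y = ext_neg a" "cond_c a w v"
        unfolding R_c_def by auto
      have "fst w \<subseteq> fst w'" using h unfolding leq_c_def by simp
      from c1[OF w w' this v a(3)] obtain v' where "v' \<in> Wc" "fst v \<subseteq> fst v'" "cond_c a w' v'"
        by blast
      then show "\<exists>v'\<in>Wc. leq_c v v' \<and> R_c w' (X, Y) v'"
        unfolding leq_c_def R_c_def using a w' by auto
    qed
    show "\<forall>X Y. \<forall>w\<in>Wc. \<forall>v\<in>Wc. \<forall>v'\<in>Wc. R_c w (X, Y) v \<and> leq_c v v' \<longrightarrow>
          (\<exists>w'\<in>Wc. leq_c w w' \<and> R_c w' (X, Y) v')"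
    proof (intro allI ballI impI)
      fix X Y w v v'
      assume w: "w \<in> Wc" and v: "v \<in> Wc" and v': "v' \<in> Wc" and h: "R_c w (X, Y) v \<and> leq_c v v'"
      then obtain a where a: "X = ext_pos a" "Y = ext_neg a" "cond_c a w v"
        unfolding R_c_def by auto
      have "fst v \<subseteq> fst v'" using h unfolding leq_c_def by simp
      from c2[OF w v v' this a(3)] obtain w' where "w' \<in> Wc" "fst w \<subseteq> fst w'" "cond_c a w' v'"
        by blast
      then show "\<exists>w'\<in>Wc. leq_c w w' \<and> R_c w' (X, Y) v'"
        unfolding leq_c_def R_c_def using a v' by auto
    qed
  qed
qed

end
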